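(* Let $X$ be a set strongly star Hurewicz space. Then the following are equivalent: (1) $X$ is meta-Lindel\"of; (2) $X$ is para-Lindel\"of; (3) $X$ is Lindel\"of.
   Context: For a subset $A$ of a space $X$ and a collection $\mathcal{U}$ of subsets of $X$, ${\rm St}(A,\mathcal{U}) = \bigcup\{U \in \mathcal{U}: U \cap A \neq \emptyset\}$. A space is meta-Lindel\"of if each open cover has a point-countable open refinement, and para-Lindel\"of if each open cover has a locally countable open refinement. $X$ is set strongly star Hurewicz if for each nonempty $A \subset X$ and each sequence $(\mathcal{U}_n: n\in\mathbb{N})$ of collections of sets open in $X$ with $\overline{A} \subset \bigcup\mathcal{U}_n$ for all $n$, there are finite sets $F_n \subset \overline{A}$ such that each $x \in A$ lies in ${\rm St}(F_n,\mathcal{U}_n)$ for all but finitely many $n$. *)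

theory Defs
  imports "HOL-Analysis.Analysis"
begin

definition star_of :: "'a set \<Rightarrow> 'a set set \<Rightarrow> 'a set" where
  "star_of A \<U> = \<Union>{U \<in> \<U>. U \<inter> A \<noteq> {}}"

definition open_refinement :: "'a topology \<Rightarrow> 'a set set \<Rightarrow> 'a set set \<Rightarrow> bool" where
  "open_refinement X \<V> \<U> \<longleftrightarrow>
     (\<forall>V\<in>\<V>. openin X V) \<and> \<Union>\<V> = topspace X \<and> (\<forall>V\<in>\<V>. \<exists>U\<in>\<U>. V \<subseteq> U)"

definition meta_Lindelof :: "'a topology \<Rightarrow> bool" where
  "meta_Lindelof X \<longleftrightarrow>
     (\<forall>\<U>. (\<forall>U\<in>\<U>. openin X U) \<and> \<Union>\<U> = topspace X \<longrightarrow>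
        (\<exists>\<V>. open_refinement X \<V> \<U> \<and>
              (\<forall>x\<in>topspace X. countable {V\<in>\<V>. x \<in> V})))"

definition para_Lindelof :: "'a topology \<Rightarrow> bool" where
  "para_Lindelof X \<longleftrightarrow>
     (\<forall>\<U>. (\<forall>U\<in>\<U>. openin X U) \<and> \<Union>\<U> = topspace X \<longrightarrow>
        (\<exists>\<V>. open_refinement X \<V> \<U> \<and>
              (\<forall>x\<in>topspace X. \<exists>N. openin X N \<and> x \<in> N \<and>
                    countable {V\<in>\<V>. V \<inter> N \<noteq> {}})))"

definition set_strongly_star_Hurewicz :: "'a topology \<Rightarrow> bool" where
  "set_strongly_star_Hurewicz X \<longleftrightarrow>
     (\<forall>A. A \<noteq> {} \<and> A \<subseteq> topspace X \<longrightarrow>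
       (\<forall>\<U> :: nat \<Rightarrow> 'a set set.
          (\<forall>n. (\<forall>U\<in>\<U> n. openin X U) \<and> X closure_of A \<subseteq> \<Union>(\<U> n)) \<longrightarrow>
          (\<exists>F :: nat \<Rightarrow> 'a set.
             (\<forall>n. finite (F n) \<and> F n \<subseteq> X closure_of A) \<and>
             (\<forall>x\<in>A. \<forall>\<^sub>F n in sequentially. x \<in> star_of (F n) (\<U> n)))))"

end

theory Submission
  imports Defs
begin

lemma lind_para:
  assumes "Lindelof_space X" shows "para_Lindelof X"
  unfolding para_Lindelof_def
proof (intro allI impI)
  fix \<U> :: "'a set set" assume h: "(\<forall>U\<in>\<U>. openin X U) \<and> \<Union>\<U> = topspace X"
  have "\<exists>\<V>. countable \<V> \<and> \<V> \<subseteq> \<U> \<and> \<Union>\<V> = topspace X"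
    using assms h unfolding Lindelof_space_def by (elim allE impE) 
  then obtain \<V> where v: "countable \<V>" "\<V> \<subseteq> \<U>" "\<Union>\<V> = topspace X"
    by (elim exE conjE)
  have r: "open_refinement X \<V> \<U>" unfolding open_refinement_def
  proof (intro conjI ballI)
    fix V assume "V \<in> \<V>"
    then show "openin X V" using v(2) h by (simp add: subset_iff)
    show "\<exists>U\<in>\<U>. V \<subseteq> U" using \<open>V \<in> \<V>\<close> v(2) by (intro bexI[of _ V]) auto
  next
    show "\<Union>\<V> = topspace X" by (rule v(3))
  qed
  have c: "\<forall>x\<in>topspace X. \<exists>N. openin X N \<and> x \<in> N \<and> countable {V\<in>\<V>. V \<inter> N \<noteq> {}}"
  proof
    fix x assume x: "x \<in> topspace X"
    have "{V\<in>\<V>. V \<inter> topspace X \<noteq> {}} \<subseteq> \<V>" by blast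
    then have "countable {V\<in>\<V>. V \<inter> topspace X \<noteq> {}}" using v(1) by (rule countable_subset)
    then show "\<exists>N. openin X N \<and> x \<in> N \<and> countable {V\<in>\<V>. V \<inter> N \<noteq> {}}"
      using x by (intro exI[of _ "topspace X"] conjI) simp_all
  qed
  show "\<exists>\<V>. open_refinement X \<V> \<U> \<and>
              (\<forall>x\<in>topspace X. \<exists>N. openin X N \<and> x \<in> N \<and> countable {V\<in>\<V>. V \<inter> N \<noteq> {}})"
    using r c by (intro exI[of _ \<V>] conjI)
qed

lemma para_meta:
  assumes "para_Lindelof X" shows "meta_Lindelof X"
  unfolding meta_Lindelof_def
proof (intro allI impI)
  fix \<U> :: "'a set set" assume h: "(\<forall>U\<in>\<U>. openin X U) \<and> \<Union>\<U> = topspace X"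
  have "\<exists>\<V>. open_refinement X \<V> \<U> \<and>
      (\<forall>x\<in>topspace X. \<exists>N. openin X N \<and> x \<in> N \<and> countable {V\<in>\<V>. V \<inter> N \<noteq> {}})"
    using assms h unfolding para_Lindelof_def by (elim allE impE)
  then obtain \<V> where v: "open_refinement X \<V> \<U>"
    "\<forall>x\<in>topspace X. \<exists>N. openin X N \<and> x \<in> N \<and> countable {V\<in>\<V>. V \<inter> N \<noteq> {}}"
    by (elim exE conjE)
  have c: "\<forall>x\<in>topspace X. countable {V\<in>\<V>. x \<in> V}"
  proof
    fix x assume "x \<in> topspace X"
    then have "\<exists>N. openin X N \<and> x \<in> N \<and> countable {V\<in>\<V>. V \<inter> N \<noteq> {}}" using v(2) by (rule bspec[rotated])
    then obtain N where N: "x \<in> N" "countable {V\<in>\<V>. V \<inter> N \<noteq> {}}" by (elim exE conjE)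
    have "{V\<in>\<V>. x \<in> V} \<subseteq> {V\<in>\<V>. V \<inter> N \<noteq> {}}" using N(1) by blast
    then show "countable {V\<in>\<V>. x \<in> V}" using N(2) by (rule countable_subset)
  qed
  show "\<exists>\<V>. open_refinement X \<V> \<U> \<and> (\<forall>x\<in>topspace X. countable {V\<in>\<V>. x \<in> V})"
    using v(1) c by (intro exI[of _ \<V>] conjI)
qed
lemma meta_lind:
  assumes S: "set_strongly_star_Hurewicz X" and M: "meta_Lindelof X" shows "Lindelof_space X"
  unfolding Lindelof_space_def
proof (intro allI impI)
  fix \<U> :: "'a set set" assume h: "(\<forall>U\<in>\<U>. openin X U) \<and> \<Union>\<U> = topspace X"
  show "\<exists>\<V>. countable \<V> \<and> \<V> \<subseteq> \<U> \<and> \<Union>\<V> = topspace X"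
  proof (cases "topspace X = {}")
    case True then show ?thesis by (intro exI[of _ "{}"]) simp
  next
    case False
    have "\<exists>\<V>. open_refinement X \<V> \<U> \<and> (\<forall>x\<in>topspace X. countable {V\<in>\<V>. x \<in> V})"
      using M h unfolding meta_Lindelof_def by (elim allE impE)
    then obtain \<V> where v: "open_refinement X \<V> \<U>" "\<forall>x\<in>topspace X. countable {V\<in>\<V>. x \<in> V}"
      by (elim exE conjE)
    have vo: "\<forall>V\<in>\<V>. openin X V" "\<Union>\<V> = topspace X" "\<forall>V\<in>\<V>. \<exists>U\<in>\<U>. V \<subseteq> U"
      using v(1) unfolding open_refinement_def by simp_all
    have cl: "X closure_of topspace X = topspace X" by simp
    obtain F :: "nat \<Rightarrow> 'a set" where F: "\<forall>n. finite (F n) \<and> F n \<subseteq> topspace X"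
      "\<forall>x\<in>topspace X. \<forall>\<^sub>F n in sequentially. x \<in> star_of (F n) \<V>"
    proof -
      have "\<forall>\<U> :: nat \<Rightarrow> 'a set set.
          (\<forall>n. (\<forall>U\<in>\<U> n. openin X U) \<and> X closure_of topspace X \<subseteq> \<Union>(\<U> n)) \<longrightarrow>
          (\<exists>F :: nat \<Rightarrow> 'a set.
             (\<forall>n. finite (F n) \<and> F n \<subseteq> X closure_of topspace X) \<and>
             (\<forall>x\<in>topspace X. \<forall>\<^sub>F n in sequentially. x \<in> star_of (F n) (\<U> n)))"
        using S unfolding set_strongly_star_Hurewicz_def
        by (elim allE[of _ "topspace X"] impE) (use False in simp_all)
      note H = this[rule_format, of "\<lambda>n. \<V>"]
      have P: "\<And>n::nat. (\<forall>U\<in>\<V>. openin X U) \<and> X closure_of topspace X \<subseteq> \<Union>\<V>"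
        using vo(1,2) cl by simp
      have "\<exists>F :: nat \<Rightarrow> 'a set.
             (\<forall>n. finite (F n) \<and> F n \<subseteq> topspace X) \<and>
             (\<forall>x\<in>topspace X. \<forall>\<^sub>F n in sequentially. x \<in> star_of (F n) \<V>)"
        using H[OF P] unfolding cl .
      then show ?thesis using that by blast
    qed
    define C where "C = (\<Union>n. F n)"
    have Cc: "countable C" unfolding C_def using F(1) by (simp add: countable_finite)
    have CX: "C \<subseteq> topspace X" unfolding C_def using F(1) by auto
    define W where "W = {V\<in>\<V>. V \<inter> C \<noteq> {}}"
    have "W = (\<Union>x\<in>C. {V\<in>\<V>. x \<in> V})" unfolding W_def by auto
    moreover have "countable (\<Union>x\<in>C. {V\<in>\<V>. x \<in> V})"
      by (rule countable_UN[OF Cc]) (use CX v(2) in blast)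
    ultimately have Wc: "countable W" by simp
    have Wcov: "topspace X \<subseteq> \<Union>W"
    proof
      fix x assume x: "x \<in> topspace X"
      from F(2) x have "\<forall>\<^sub>F n in sequentially. x \<in> star_of (F n) \<V>" by blast
      then obtain N where "\<forall>n\<ge>N. x \<in> star_of (F n) \<V>" unfolding eventually_sequentially by blast
      then obtain n where "x \<in> star_of (F n) \<V>" by blast
      then obtain V where "V \<in> \<V>" "V \<inter> F n \<noteq> {}" "x \<in> V" unfolding star_of_def by auto
      then show "x \<in> \<Union>W" unfolding W_def C_def by blast
    qed
    have "\<forall>V\<in>W. \<exists>U. U \<in> \<U> \<and> V \<subseteq> U" using vo(3) unfolding W_def by blast
    then obtain g where g: "\<forall>V\<in>W. g V \<in> \<U> \<and> V \<subseteq> g V" by metis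
    have "countable (g ` W)" using Wc by simp
    moreover have "g ` W \<subseteq> \<U>" using g by auto
    moreover have "\<Union>(g ` W) = topspace X"
    proof
      show "\<Union>(g ` W) \<subseteq> topspace X"
      proof
        fix x assume "x \<in> \<Union>(g ` W)"
        then obtain V where "V \<in> W" "x \<in> g V" by blast
        with g have "g V \<in> \<U>" by blast
        with \<open>x \<in> g V\<close> h show "x \<in> topspace X" by blast
      qed
      show "topspace X \<subseteq> \<Union>(g ` W)"
      proof
        fix x assume "x \<in> topspace X"
        with Wcov obtain V where "V \<in> W" "x \<in> V" by blast
        with g show "x \<in> \<Union>(g ` W)" by blast
      qed
    qed
    ultimately show ?thesis by blast
  qed
qed

theorem mainTheorem4:
  fixes X :: "'a topology"
  assumes "set_strongly_star_Hurewicz X"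
  shows "(meta_Lindelof X \<longleftrightarrow> para_Lindelof X) \<and> (para_Lindelof X \<longleftrightarrow> Lindelof_space X)"
proof -
  have a: "meta_Lindelof X \<Longrightarrow> Lindelof_space X" by (rule meta_lind[OF assms])
  have b: "para_Lindelof X \<Longrightarrow> meta_Lindelof X" by (rule para_meta)
  have c: "Lindelof_space X \<Longrightarrow> para_Lindelof X" by (rule lind_para)
  show ?thesis
  proof (intro conjI iffI)
    show "meta_Lindelof X \<Longrightarrow> para_Lindelof X" using a c by blast
    show "para_Lindelof X \<Longrightarrow> meta_Lindelof X" by (rule b)
    show "para_Lindelof X \<Longrightarrow> Lindelof_space X" using a b by blast
    show "Lindelof_space X \<Longrightarrow> para_Lindelof X" by (rule c)
  qed
qed

end
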